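(* Let $G=(V,E)$ be a strongly biconnected directed graph and let $U\subseteq E$ be such that the directed subgraph $G_1=(V,U)$ is strongly connected but the underlying undirected graph of $G_1$ is not biconnected. Let $(v,w)\in E\setminus U$ be an edge such that $v$ and $w$ are not in the same strongly biconnected component of $G_1$. Then the directed subgraph $(V,U\cup\{(v,w)\})$ has fewer strongly biconnected components than $G_1$.
   Context: A directed graph is strongly biconnected if it is strongly connected and its underlying undirected graph (obtained by ignoring edge directions) is biconnected. A strongly biconnected component of a directed graph is a maximal strongly biconnected subgraph of it (in the sense of Wu and Grumbach); two vertices are in the same strongly biconnected component if some strongly biconnected component contains both. *)

theory Defs
  imports Main
begin

definition digraph :: "'a set \<Rightarrow> ('a \<times> 'a) set \<Rightarrow> bool" where
  "digraph V E \<longleftrightarrow> E \<subseteq> V \<times> V"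

definition strongly_connected :: "'a set \<Rightarrow> ('a \<times> 'a) set \<Rightarrow> bool" where
  "strongly_connected V E \<longleftrightarrow> (\<forall>x\<in>V. \<forall>y\<in>V. (x, y) \<in> (E \<inter> (V \<times> V))\<^sup>*)"

definition ug_edges :: "('a \<times> 'a) set \<Rightarrow> ('a \<times> 'a) set" where
  "ug_edges E = {(x, y). x \<noteq> y \<and> ((x, y) \<in> E \<or> (y, x) \<in> E)}"

definition ug_connected :: "'a set \<Rightarrow> ('a \<times> 'a) set \<Rightarrow> bool" where
  "ug_connected V E \<longleftrightarrow> (\<forall>x\<in>V. \<forall>y\<in>V. (x, y) \<in> (ug_edges E \<inter> (V \<times> V))\<^sup>*)"

definition ug_biconnected :: "'a set \<Rightarrow> ('a \<times> 'a) set \<Rightarrow> bool" where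
  "ug_biconnected V E \<longleftrightarrow> ug_connected V E \<and>
     (\<forall>z\<in>V. ug_connected (V - {z}) (E \<inter> ((V - {z}) \<times> (V - {z}))))"

definition strongly_biconnected :: "'a set \<Rightarrow> ('a \<times> 'a) set \<Rightarrow> bool" where
  "strongly_biconnected V E \<longleftrightarrow> strongly_connected V E \<and> ug_biconnected V E"

definition subgraph :: "'a set \<Rightarrow> ('a \<times> 'a) set \<Rightarrow> 'a set \<Rightarrow> ('a \<times> 'a) set \<Rightarrow> bool" where
  "subgraph V' E' V E \<longleftrightarrow> V' \<subseteq> V \<and> E' \<subseteq> E \<and> E' \<subseteq> V' \<times> V'"

definition sbcs :: "'a set \<Rightarrow> ('a \<times> 'a) set \<Rightarrow> ('a set \<times> ('a \<times> 'a) set) set" where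
  "sbcs V E = {(V', E'). subgraph V' E' V E \<and> strongly_biconnected V' E' \<and>
      (\<forall>V'' E''. subgraph V'' E'' V E \<and> strongly_biconnected V'' E'' \<and>
                 V' \<subseteq> V'' \<and> E' \<subseteq> E'' \<longrightarrow> V'' = V' \<and> E'' = E')}"

definition same_sbc :: "'a set \<Rightarrow> ('a \<times> 'a) set \<Rightarrow> 'a \<Rightarrow> 'a \<Rightarrow> bool" where
  "same_sbc V E v w \<longleftrightarrow> (\<exists>(V', E') \<in> sbcs V E. v \<in> V' \<and> w \<in> V')"

end

theory Submission
  imports Defs "HOL-Library.Product_Order" "HOL-Library.Transitive_Closure_Table"
begin

definition conn :: "('a \<times> 'a) set \<Rightarrow> 'a set \<Rightarrow> bool" where
  "conn R X \<longleftrightarrow> (\<forall>x\<in>X. \<forall>y\<in>X. (x, y) \<in> (R \<inter> X \<times> X)\<^sup>*)"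

lemma sc_conn: "strongly_connected V E = conn E V"
  by (simp add: strongly_connected_def conn_def)

lemma ugc_conn: "ug_connected V E = conn (ug_edges E) V"
  by (simp add: ug_connected_def conn_def)

lemma ug_edges_restrict: "ug_edges (E \<inter> X \<times> X) \<inter> X \<times> X = ug_edges E \<inter> X \<times> X"
  by (auto simp: ug_edges_def)

lemma ug_edges_mono: "E \<subseteq> F \<Longrightarrow> ug_edges E \<subseteq> ug_edges F"
  by (auto simp: ug_edges_def)

lemma ubc_alt: "ug_biconnected V E \<longleftrightarrow> conn (ug_edges E) V \<and> (\<forall>z\<in>V. conn (ug_edges E) (V - {z}))"
  by (simp add: ug_biconnected_def ug_connected_def conn_def ug_edges_restrict)

lemma sb_alt: "strongly_biconnected V E \<longleftrightarrow> conn E V \<and> conn (ug_edges E) V \<and> (\<forall>z\<in>V. conn (ug_edges E) (V - {z}))"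
  by (simp add: strongly_biconnected_def sc_conn ubc_alt)

lemma conn_union:
  assumes "conn R X" "conn S Y" "R \<subseteq> T" "S \<subseteq> T" "X \<inter> Y \<noteq> {}"
  shows "conn T (X \<union> Y)"
proof -
  have m1: "(R \<inter> X \<times> X)\<^sup>* \<subseteq> (T \<inter> (X \<union> Y) \<times> (X \<union> Y))\<^sup>*"
    by (rule rtrancl_mono) (use assms in auto)
  have m2: "(S \<inter> Y \<times> Y)\<^sup>* \<subseteq> (T \<inter> (X \<union> Y) \<times> (X \<union> Y))\<^sup>*"
    by (rule rtrancl_mono) (use assms in auto)
  obtain c where c: "c \<in> X" "c \<in> Y" using assms(5) by blast
  have h: "(x, c) \<in> (T \<inter> (X \<union> Y) \<times> (X \<union> Y))\<^sup>* \<and> (c, x) \<in> (T \<inter> (X \<union> Y) \<times> (X \<union> Y))\<^sup>*"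
    if "x \<in> X \<union> Y" for x
    using that c assms(1,2) m1 m2 unfolding conn_def by blast
  show ?thesis unfolding conn_def using h by (meson rtrancl_trans)
qed

lemma sb_union:
  assumes "strongly_biconnected A EA" "strongly_biconnected B EB"
    "x \<in> A" "x \<in> B" "y \<in> A" "y \<in> B" "x \<noteq> y"
  shows "strongly_biconnected (A \<union> B) (EA \<union> EB)"
proof -
  have a: "conn EA A" "conn (ug_edges EA) A" "\<forall>z\<in>A. conn (ug_edges EA) (A - {z})"
    using assms(1) by (auto simp: sb_alt)
  have b: "conn EB B" "conn (ug_edges EB) B" "\<forall>z\<in>B. conn (ug_edges EB) (B - {z})"
    using assms(2) by (auto simp: sb_alt)
  have u: "ug_edges EA \<subseteq> ug_edges (EA \<union> EB)" "ug_edges EB \<subseteq> ug_edges (EA \<union> EB)"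
    using ug_edges_mono[of EA "EA \<union> EB"] ug_edges_mono[of EB "EA \<union> EB"] by auto
  have 1: "conn (EA \<union> EB) (A \<union> B)"
    by (rule conn_union[OF a(1) b(1)]) (use assms in auto)
  have 2: "conn (ug_edges (EA \<union> EB)) (A \<union> B)"
    by (rule conn_union[OF a(2) b(2) u]) (use assms in auto)
  have 3: "conn (ug_edges (EA \<union> EB)) (A \<union> B - {z})" if "z \<in> A \<union> B" for z
  proof -
    have ca: "conn (ug_edges EA) (A - {z})" using a by (cases "z \<in> A") auto
    have cb: "conn (ug_edges EB) (B - {z})" using b by (cases "z \<in> B") auto
    have "(A - {z}) \<inter> (B - {z}) \<noteq> {}" using assms by auto
    then have "conn (ug_edges (EA \<union> EB)) ((A - {z}) \<union> (B - {z}))"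
      by (rule conn_union[OF ca cb u])
    moreover have "(A - {z}) \<union> (B - {z}) = A \<union> B - {z}" by auto
    ultimately show ?thesis by simp
  qed
  show ?thesis using 1 2 3 by (simp add: sb_alt)
qed

lemma root_ugc:
  assumes "r \<in> Q" "\<forall>y\<in>Q. (r, y) \<in> (E \<inter> Q \<times> Q)\<^sup>*"
  shows "conn (ug_edges E) Q"
proof -
  let ?S = "ug_edges E \<inter> Q \<times> Q"
  have sub: "E \<inter> Q \<times> Q \<subseteq> ?S \<union> Id" by (auto simp: ug_edges_def)
  have "(E \<inter> Q \<times> Q)\<^sup>* \<subseteq> (?S \<union> Id)\<^sup>*" by (rule rtrancl_mono[OF sub])
  also have "\<dots> = ?S\<^sup>*" by simp
  finally have f: "\<forall>y\<in>Q. (r, y) \<in> ?S\<^sup>*" using assms by blast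
  have sym: "sym ?S" by (auto simp: ug_edges_def sym_def)
  have symr: "sym (?S\<^sup>*)" by (rule sym_rtrancl[OF sym])
  show ?thesis unfolding conn_def using f symr by (meson rtrancl_trans symD)
qed

lemma sc_ugc: "conn E Q \<Longrightarrow> conn (ug_edges E) Q"
proof (cases "Q = {}")
  case True then show ?thesis by (simp add: conn_def)
next
  case False
  then obtain r where "r \<in> Q" by blast
  moreover assume "conn E Q"
  ultimately show ?thesis using root_ugc unfolding conn_def by metis
qed

definition pth :: "('a \<times> 'a) set \<Rightarrow> 'a list \<Rightarrow> bool" where
  "pth R ys \<longleftrightarrow> (\<forall>k. Suc k < length ys \<longrightarrow> (ys ! k, ys ! Suc k) \<in> R)"

lemma pth_reach:
  assumes "pth R ys" "ys \<noteq> []"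
  shows "\<forall>y\<in>set ys. (hd ys, y) \<in> (R \<inter> set ys \<times> set ys)\<^sup>*"
proof -
  have "(hd ys, ys ! j) \<in> (R \<inter> set ys \<times> set ys)\<^sup>*" if "j < length ys" for j
    using that
  proof (induction j)
    case 0 then show ?case using assms(2) by (simp add: hd_conv_nth)
  next
    case (Suc j)
    then have "(ys ! j, ys ! Suc j) \<in> R \<inter> set ys \<times> set ys"
      using assms(1) unfolding pth_def by auto
    with Suc show ?case by (meson Suc_lessD rtrancl_into_rtrancl)
  qed
  then show ?thesis by (metis in_set_conv_nth)
qed

definition cyc :: "('a \<times> 'a) set \<Rightarrow> 'a list \<Rightarrow> bool" where
  "cyc R xs \<longleftrightarrow> distinct xs \<and> 2 \<le> length xs \<and>
     (\<forall>i<length xs. (xs ! i, xs ! (Suc i mod length xs)) \<in> R)"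

lemma cyc_pth: "cyc R xs \<Longrightarrow> pth R xs"
  unfolding cyc_def pth_def
  by (metis Suc_lessD mod_less)

lemma cyc_rotate:
  assumes "cyc R xs" shows "cyc R (rotate m xs)"
proof -
  let ?n = "length xs"
  have c: "distinct xs" "2 \<le> ?n" "\<forall>i<?n. (xs ! i, xs ! (Suc i mod ?n)) \<in> R"
    using assms by (auto simp: cyc_def)
  have "(rotate m xs ! i, rotate m xs ! (Suc i mod ?n)) \<in> R" if i: "i < ?n" for i
  proof -
    have n0: "0 < ?n" using c(2) by linarith
    have e: "rotate m xs ! i = xs ! ((m + i) mod ?n)" using i by (simp add: nth_rotate)
    have e2: "rotate m xs ! (Suc i mod ?n) = xs ! (Suc ((m + i) mod ?n) mod ?n)"
      using n0 by (simp add: nth_rotate mod_add_right_eq mod_Suc_eq)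
    have ne: "xs \<noteq> []" using n0 by auto
    have "(m + i) mod ?n < ?n" using n0 by simp
    then show ?thesis using c(3) e e2 by simp
  qed
  then show ?thesis using c by (simp add: cyc_def)
qed

lemma pth_butlast: "pth R xs \<Longrightarrow> pth R (butlast xs)"
  unfolding pth_def by (simp add: nth_butlast)

lemma cyc_sb:
  assumes "cyc R xs"
  shows "strongly_biconnected (set xs) (R \<inter> set xs \<times> set xs)"
proof -
  let ?P = "set xs"
  let ?n = "length xs"
  have c: "distinct xs" "2 \<le> ?n" using assms by (auto simp: cyc_def)
  have eqR: "R \<inter> ?P \<times> ?P \<inter> ?P \<times> ?P = R \<inter> ?P \<times> ?P" by blast
  have sc: "conn (R \<inter> ?P \<times> ?P) ?P"
    unfolding conn_def eqR
  proof (intro ballI)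
    fix x y assume x: "x \<in> ?P" and y: "y \<in> ?P"
    then obtain i where i: "i < ?n" "xs ! i = x" by (metis in_set_conv_nth)
    let ?ys = "rotate i xs"
    have "pth R ?ys" using cyc_rotate cyc_pth assms by blast
    moreover have "?ys \<noteq> []" using c by auto
    moreover have "hd ?ys = x"
    proof -
      have "xs \<noteq> []" by (rule ccontr) (use c(2) in simp)
      then show ?thesis using i by (simp add: hd_rotate_conv_nth)
    qed
    moreover have "set ?ys = ?P" by simp
    ultimately show "(x, y) \<in> (R \<inter> ?P \<times> ?P)\<^sup>*" using pth_reach y by metis
  qed
  have rem: "conn (ug_edges (R \<inter> ?P \<times> ?P)) (?P - {z})" if z: "z \<in> ?P" for z
  proof -
    obtain i where i: "i < ?n" "xs ! i = z" using z by (metis in_set_conv_nth)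
    let ?ys = "rotate (Suc i) xs"
    let ?zs = "butlast ?ys"
    have cy: "cyc R ?ys" using cyc_rotate assms by blast
    have dy: "distinct ?ys" "length ?ys = ?n" using c by simp_all
    have ne: "?ys \<noteq> []" using c by auto
    have "Suc i + (?n - 1) = i + ?n" using c by simp
    note sn = this
    have nl: "?n - 1 < ?n" using c(2) by linarith
    have "last ?ys = ?ys ! (length ?ys - 1)" by (rule last_conv_nth[OF ne])
    also have "\<dots> = ?ys ! (?n - 1)" using dy(2) by simp
    also have "\<dots> = xs ! ((Suc i + (?n - 1)) mod ?n)" by (rule nth_rotate[OF nl])
    also have "\<dots> = xs ! ((i + ?n) mod ?n)" by (simp only: sn)
    also have "\<dots> = z" using i by simp
    finally have lz: "last ?ys = z" .
    have yy: "?zs @ [last ?ys] = ?ys" by (rule append_butlast_last_id[OF ne])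
    have sz: "set ?zs = ?P - {z}"
    proof -
      have s1: "set (?zs @ [last ?ys]) = set xs" unfolding yy by simp
      have d1: "distinct (?zs @ [last ?ys])" unfolding yy by (rule dy(1))
      have "set ?ys = set ?zs \<union> {last ?ys}" using s1 by simp
      moreover have "last ?ys \<notin> set ?zs" using d1 by simp
      ultimately show ?thesis using lz by auto
    qed
    have nz: "?zs \<noteq> []" proof -
      have "length ?zs = ?n - 1" using dy by simp
      then have "1 \<le> length ?zs" using c(2) by linarith
      then show ?thesis by (metis list.size(3) not_one_le_zero)
    qed
    have pz: "pth R ?zs" using pth_butlast cyc_pth cy by blast
    have r: "\<forall>y\<in>set ?zs. (hd ?zs, y) \<in> (R \<inter> set ?zs \<times> set ?zs)\<^sup>*" using pth_reach pz nz by blast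
    have r2: "\<forall>y\<in>?P - {z}. (hd ?zs, y) \<in> (R \<inter> (?P - {z}) \<times> (?P - {z}))\<^sup>*"
      using r unfolding sz .
    have e2: "(R \<inter> ?P \<times> ?P) \<inter> (?P - {z}) \<times> (?P - {z}) = R \<inter> (?P - {z}) \<times> (?P - {z})"
      by blast
    have r3: "\<forall>y\<in>?P - {z}. (hd ?zs, y) \<in> ((R \<inter> ?P \<times> ?P) \<inter> (?P - {z}) \<times> (?P - {z}))\<^sup>*"
      unfolding e2 by (rule r2)
    have hz: "hd ?zs \<in> ?P - {z}" using hd_in_set[OF nz] unfolding sz .
    show ?thesis by (rule root_ugc[OF hz r3])
  qed
  show ?thesis using sc sc_ugc[OF sc] rem by (simp add: sb_alt)
qed

lemma rpath_pth: "rtrancl_path r x ys z \<Longrightarrow> pth {(a, b). r a b} (x # ys) \<and> last (x # ys) = z"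
proof (induction rule: rtrancl_path.induct)
  case (base x) then show ?case by (simp add: pth_def)
next
  case (step x y ys z)
  have "((x # y # ys) ! k, (x # y # ys) ! Suc k) \<in> {(a, b). r a b}"
    if "Suc k < length (x # y # ys)" for k
  proof (cases k)
    case 0 then show ?thesis using step by simp
  next
    case (Suc k') then show ?thesis using step that unfolding pth_def by simp
  qed
  then show ?case using step by (simp add: pth_def)
qed

lemma cycle_exists:
  assumes "(a, b) \<in> R" "a \<noteq> b" "(b, a) \<in> (R \<inter> V \<times> V)\<^sup>*" "b \<in> V"
  shows "\<exists>P \<subseteq> V. a \<in> P \<and> b \<in> P \<and> strongly_biconnected P (R \<inter> P \<times> P)"
proof -
  let ?r = "\<lambda>x y. (x, y) \<in> R \<inter> V \<times> V"
  have eqr: "{(x, y). ?r x y} = R \<inter> V \<times> V" by auto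
  have "?r\<^sup>*\<^sup>* b a" using assms(3) unfolding rtranclp_rtrancl_eq eqr .
  then obtain xs where "rtrancl_path ?r b xs a" by (auto simp: rtranclp_eq_rtrancl_path)
  then obtain ys where p: "rtrancl_path ?r b ys a" "distinct (b # ys)"
    by (auto elim: rtrancl_path_distinct)
  from rpath_pth[OF p(1)] have pt0: "pth {(x, y). ?r x y} (b # ys)" "last (b # ys) = a" by blast+
  then have pt: "pth (R \<inter> V \<times> V) (b # ys)" "last (b # ys) = a" unfolding eqr by blast+
  have yne: "ys \<noteq> []" using pt assms(2) by auto
  have sV: "set (b # ys) \<subseteq> V"
  proof
    fix y assume "y \<in> set (b # ys)"
    then obtain k where k: "k < length (b # ys)" "(b # ys) ! k = y" by (metis in_set_conv_nth)
    show "y \<in> V"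
    proof (cases k)
      case 0 then show ?thesis using k assms(4) by simp
    next
      case (Suc k')
      then have "((b # ys) ! k', (b # ys) ! k) \<in> R \<inter> V \<times> V" using pt(1) k unfolding pth_def by auto
      then show ?thesis using k by auto
    qed
  qed
  have cy: "cyc R (b # ys)"
    unfolding cyc_def
  proof (intro conjI allI impI)
    show "distinct (b # ys)" by (rule p(2))
    show "2 \<le> length (b # ys)" using yne by (cases ys) auto
    fix i assume i: "i < length (b # ys)"
    show "((b # ys) ! i, (b # ys) ! (Suc i mod length (b # ys))) \<in> R"
    proof (cases "Suc i < length (b # ys)")
      case True then show ?thesis using pt(1) unfolding pth_def by simp
    next
      case False
      then have "Suc i = length (b # ys)" using i by simp
      moreover have "(b # ys) ! i = a" using pt(2) calculation yne
        by (cases ys rule: rev_cases) (auto simp: nth_append)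
      ultimately show ?thesis using assms(1) by simp
    qed
  qed
  show ?thesis using cyc_sb[OF cy] sV pt(2) yne by (intro exI[of _ "set (b # ys)"]) auto
qed

lemma last_edge: "(x, y) \<in> R\<^sup>* \<Longrightarrow> x \<noteq> y \<Longrightarrow> \<exists>u. (u, y) \<in> R \<and> u \<noteq> y"
  by (induction rule: rtrancl_induct) auto

lemma first_edge: "(x, y) \<in> R\<^sup>* \<Longrightarrow> x \<noteq> y \<Longrightarrow> \<exists>u. (x, u) \<in> R \<and> u \<noteq> x"
  by (induction rule: converse_rtrancl_induct) auto

lemma sbcs_iff: "(A, B) \<in> sbcs V E \<longleftrightarrow> subgraph A B V E \<and> strongly_biconnected A B \<and>
  (\<forall>V'' E''. subgraph V'' E'' V E \<and> strongly_biconnected V'' E'' \<and> A \<subseteq> V'' \<and> B \<subseteq> E'' \<longrightarrow> V'' = A \<and> E'' = B)"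
  unfolding sbcs_def mem_Collect_eq prod.case by (rule refl)

lemma ext_sbc:
  assumes "finite V" "subgraph V0 E0 V E" "strongly_biconnected V0 E0"
  shows "\<exists>V' E'. (V', E') \<in> sbcs V E \<and> V0 \<subseteq> V' \<and> E0 \<subseteq> E'"
proof -
  let ?C = "{p. subgraph (fst p) (snd p) V E \<and> strongly_biconnected (fst p) (snd p)}"
  have "?C \<subseteq> Pow V \<times> Pow (V \<times> V)" by (auto simp: subgraph_def)
  then have fin: "finite ?C" using assms(1) by (meson finite_Pow_iff finite_SigmaI rev_finite_subset)
  have "(V0, E0) \<in> ?C" using assms by simp
  from finite_has_maximal2[OF fin this] obtain m where
    m: "m \<in> ?C" "(V0, E0) \<le> m" "\<forall>b\<in>?C. m \<le> b \<longrightarrow> m = b" by blast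
  obtain V' E' where me: "m = (V', E')" by (cases m)
  have m1: "subgraph V' E' V E" "strongly_biconnected V' E'" using m(1) me by auto
  have m2: "V0 \<subseteq> V'" "E0 \<subseteq> E'" using m(2) me by (auto simp: less_eq_prod_def)
  have m3: "V'' = V' \<and> E'' = E'"
    if "subgraph V'' E'' V E" "strongly_biconnected V'' E''" "V' \<subseteq> V''" "E' \<subseteq> E''" for V'' E''
  proof -
    have "(V'', E'') \<in> ?C" using that by simp
    moreover have "m \<le> (V'', E'')" using that me by (simp add: less_eq_prod_def)
    ultimately have "m = (V'', E'')" using m(3) by blast
    then show ?thesis using me by simp
  qed
  have "(V', E') \<in> sbcs V E" unfolding sbcs_iff using m1 m3 by blast
  then show ?thesis using m2 by blast
qed

lemma sbcs_eq:
  assumes "(AV, AE) \<in> sbcs V G" "(BV, BE) \<in> sbcs V G"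
    "x \<in> AV" "x \<in> BV" "y \<in> AV" "y \<in> BV" "x \<noteq> y"
  shows "AV = BV \<and> AE = BE"
proof -
  have A: "subgraph AV AE V G" "strongly_biconnected AV AE"
    "\<forall>V'' E''. subgraph V'' E'' V G \<and> strongly_biconnected V'' E'' \<and> AV \<subseteq> V'' \<and> AE \<subseteq> E'' \<longrightarrow> V'' = AV \<and> E'' = AE"
    using assms(1) unfolding sbcs_iff by blast+
  have B: "subgraph BV BE V G" "strongly_biconnected BV BE"
    "\<forall>V'' E''. subgraph V'' E'' V G \<and> strongly_biconnected V'' E'' \<and> BV \<subseteq> V'' \<and> BE \<subseteq> E'' \<longrightarrow> V'' = BV \<and> E'' = BE"
    using assms(2) unfolding sbcs_iff by blast+
  have u: "strongly_biconnected (AV \<union> BV) (AE \<union> BE)"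
    by (rule sb_union[OF A(2) B(2)]) (use assms in auto)
  have s: "subgraph (AV \<union> BV) (AE \<union> BE) V G" using A(1) B(1) by (auto simp: subgraph_def)
  have "AV \<union> BV = AV \<and> AE \<union> BE = AE" using A(3) u s by blast
  moreover have "AV \<union> BV = BV \<and> AE \<union> BE = BE" using B(3) u s by blast
  ultimately show ?thesis by blast
qed

lemma sb_single: "strongly_biconnected {v} {}"
  by (simp add: strongly_biconnected_def strongly_connected_def ug_biconnected_def ug_connected_def)

theorem mainTheorem1:
  fixes V :: "'a set" and E U :: "('a \<times> 'a) set" and v w :: 'a
  assumes "finite V"
    and "digraph V E"
    and "strongly_biconnected V E"
    and "U \<subseteq> E"
    and "strongly_connected V U"
    and "\<not> ug_biconnected V U"
    and "(v, w) \<in> E - U"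
    and "\<not> same_sbc V U v w"
  shows "card (sbcs V (insert (v, w) U)) < card (sbcs V U)"
proof -
  let ?G = "insert (v, w) U"
  have vwE: "(v, w) \<in> E" using assms(7) by blast
  have vw: "v \<in> V" "w \<in> V" using assms(2) vwE unfolding digraph_def by blast+
  have notsame: "\<not> (v \<in> SV \<and> w \<in> SV)" if S: "(SV, SE) \<in> sbcs V U" for SV SE
  proof
    assume "v \<in> SV \<and> w \<in> SV"
    then have "same_sbc V U v w" unfolding same_sbc_def using S by (intro bexI[of _ "(SV, SE)"]) auto
    with assms(8) show False by simp
  qed
  have vnw: "v \<noteq> w"
  proof
    assume "v = w"
    have "subgraph {v} {} V U" using vw by (simp add: subgraph_def)
    from ext_sbc[OF assms(1) this sb_single] obtain SV SE where
      "(SV, SE) \<in> sbcs V U" "v \<in> SV" by blast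
    then show False using notsame \<open>v = w\<close> by blast
  qed
  have scU: "\<forall>x\<in>V. \<forall>y\<in>V. (x, y) \<in> (U \<inter> V \<times> V)\<^sup>*"
    using assms(5) by (simp add: strongly_connected_def)
  have wvG: "(w, v) \<in> (?G \<inter> V \<times> V)\<^sup>*"
  proof -
    have "U \<inter> V \<times> V \<subseteq> ?G \<inter> V \<times> V" by blast
    then have "(U \<inter> V \<times> V)\<^sup>* \<subseteq> (?G \<inter> V \<times> V)\<^sup>*" by (rule rtrancl_mono)
    then show ?thesis using scU vw by blast
  qed
  have vwG: "(v, w) \<in> ?G" by simp
  from cycle_exists[OF vwG vnw wvG vw(2)] obtain P where
    P: "P \<subseteq> V" "v \<in> P" "w \<in> P" "strongly_biconnected P (?G \<inter> P \<times> P)" by blast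
  have "subgraph P (?G \<inter> P \<times> P) V ?G" using P by (auto simp: subgraph_def)
  from ext_sbc[OF assms(1) this P(4)] obtain NV NE where
    N: "(NV, NE) \<in> sbcs V ?G" "P \<subseteq> NV" by blast
  have vwN: "v \<in> NV" "w \<in> NV" using N P by auto
  have Nsub: "subgraph NV NE V ?G" "strongly_biconnected NV NE" using N(1) unfolding sbcs_iff by blast+
  have A: "sbcs V ?G - {(NV, NE)} \<subseteq> sbcs V U"
  proof
    fix H assume H: "H \<in> sbcs V ?G - {(NV, NE)}"
    obtain HV HE where He: "H = (HV, HE)" by (cases H)
    have Hin: "(HV, HE) \<in> sbcs V ?G" "(HV, HE) \<noteq> (NV, NE)" using H He by auto
    have Hs: "subgraph HV HE V ?G" "strongly_biconnected HV HE"
      "\<forall>V'' E''. subgraph V'' E'' V ?G \<and> strongly_biconnected V'' E'' \<and> HV \<subseteq> V'' \<and> HE \<subseteq> E'' \<longrightarrow> V'' = HV \<and> E'' = HE"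
      using Hin(1) unfolding sbcs_iff by blast+
    have "(v, w) \<notin> HE"
    proof
      assume "(v, w) \<in> HE"
      then have "v \<in> HV" "w \<in> HV" using Hs(1) by (auto simp: subgraph_def)
      then show False using sbcs_eq[OF Hin(1) N(1) _ vwN(1) _ vwN(2) vnw] Hin(2) by blast
    qed
    then have "subgraph HV HE V U" using Hs(1) by (auto simp: subgraph_def)
    moreover have "\<forall>V'' E''. subgraph V'' E'' V U \<and> strongly_biconnected V'' E'' \<and> HV \<subseteq> V'' \<and> HE \<subseteq> E'' \<longrightarrow> V'' = HV \<and> E'' = HE"
      using Hs(3) by (auto simp: subgraph_def)
    ultimately show "H \<in> sbcs V U" using Hs(2) unfolding He sbcs_iff by blast
  qed
  have wvN: "(w, v) \<in> (NE \<inter> NV \<times> NV)\<^sup>*"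
    using Nsub(2) vwN by (simp add: strongly_biconnected_def strongly_connected_def)
  have wnv: "w \<noteq> v" using vnw by blast
  from last_edge[OF wvN wnv] obtain u where u: "(u, v) \<in> NE \<inter> NV \<times> NV" "u \<noteq> v"
    by blast
  from first_edge[OF wvN wnv] obtain u' where u': "(w, u') \<in> NE \<inter> NV \<times> NV" "u' \<noteq> w"
    by blast
  have uU: "(u, v) \<in> U" "u \<in> V" using u Nsub(1) vnw by (auto simp: subgraph_def)
  have uU': "(w, u') \<in> U" "u' \<in> V" using u' Nsub(1) vnw by (auto simp: subgraph_def)
  have UV: "U \<subseteq> V \<times> V" using assms(2,4) by (auto simp: digraph_def)
  obtain P1 where P1: "P1 \<subseteq> V" "u \<in> P1" "v \<in> P1" "strongly_biconnected P1 (U \<inter> P1 \<times> P1)"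
    using cycle_exists[OF uU(1) u(2) _ vw(1)] scU uU(2) vw by blast
  have "subgraph P1 (U \<inter> P1 \<times> P1) V U" using P1 by (auto simp: subgraph_def)
  from ext_sbc[OF assms(1) this P1(4)] obtain S1V S1E where
    S1: "(S1V, S1E) \<in> sbcs V U" "P1 \<subseteq> S1V" by blast
  obtain P2 where P2: "P2 \<subseteq> V" "w \<in> P2" "u' \<in> P2" "strongly_biconnected P2 (U \<inter> P2 \<times> P2)"
    using cycle_exists[OF uU'(1) u'(2)[symmetric] _ uU'(2)] scU uU'(2) vw by blast
  have "subgraph P2 (U \<inter> P2 \<times> P2) V U" using P2 by (auto simp: subgraph_def)
  from ext_sbc[OF assms(1) this P2(4)] obtain S2V S2E where
    S2: "(S2V, S2E) \<in> sbcs V U" "P2 \<subseteq> S2V" by blast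
  have S1n: "(S1V, S1E) \<notin> sbcs V ?G"
  proof
    assume "(S1V, S1E) \<in> sbcs V ?G"
    have a1: "u \<in> S1V" "v \<in> S1V" using S1(2) P1(2,3) by blast+
    have a2: "u \<in> NV" using u(1) by blast
    have "S1V = NV" using sbcs_eq[OF \<open>(S1V, S1E) \<in> sbcs V ?G\<close> N(1) a1(1) a2 a1(2) vwN(1) u(2)] by blast
    then have "w \<in> S1V" using vwN by blast
    then show False using notsame[OF S1(1)] a1 by blast
  qed
  have S2n: "(S2V, S2E) \<notin> sbcs V ?G"
  proof
    assume "(S2V, S2E) \<in> sbcs V ?G"
    have a1: "w \<in> S2V" "u' \<in> S2V" using S2(2) P2(2,3) by blast+
    have a2: "u' \<in> NV" using u'(1) by blast
    have "S2V = NV" using sbcs_eq[OF \<open>(S2V, S2E) \<in> sbcs V ?G\<close> N(1) a1(1) vwN(2) a1(2) a2 u'(2)[symmetric]] by blast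
    then have "v \<in> S2V" using vwN by blast
    then show False using notsame[OF S2(1)] a1 by blast
  qed
  have S12: "(S1V, S1E) \<noteq> (S2V, S2E)"
  proof
    assume "(S1V, S1E) = (S2V, S2E)"
    then have "S1V = S2V" by simp
    moreover have "v \<in> S1V" "w \<in> S2V" using S1(2) P1(3) S2(2) P2(2) by blast+
    ultimately show False using notsame[OF S1(1)] by blast
  qed
  have finold: "finite (sbcs V U)"
  proof -
    have "sbcs V U \<subseteq> Pow V \<times> Pow (V \<times> V)"
    proof
      fix p assume p: "p \<in> sbcs V U"
      obtain A B where pe: "p = (A, B)" by (cases p)
      have "(A, B) \<in> sbcs V U" using p pe by simp
      then have "subgraph A B V U" unfolding sbcs_iff by blast
      then show "p \<in> Pow V \<times> Pow (V \<times> V)" using pe by (auto simp: subgraph_def)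
    qed
    then show ?thesis using assms(1) by (meson finite_Pow_iff finite_SigmaI rev_finite_subset)
  qed
  have sub: "sbcs V ?G \<subseteq> insert (NV, NE) (sbcs V U - {(S1V, S1E), (S2V, S2E)})"
    using A S1n S2n by blast
  let ?D = "{(S1V, S1E), (S2V, S2E)}"
  have Dsub: "?D \<subseteq> sbcs V U" using S1(1) S2(1) by blast
  have cD: "card ?D = 2" using S12 by simp
  have finr: "finite (sbcs V U - ?D)" using finold by blast
  have fi: "finite (insert (NV, NE) (sbcs V U - ?D))" using finr by (rule finite.insertI)
  have c1: "card (sbcs V ?G) \<le> card (insert (NV, NE) (sbcs V U - ?D))"
    by (rule card_mono[OF fi sub])
  have c2: "card (insert (NV, NE) (sbcs V U - ?D)) \<le> Suc (card (sbcs V U - ?D))"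
  proof -
    have e: "card (insert (NV, NE) (sbcs V U - ?D)) = (if (NV, NE) \<in> sbcs V U - ?D then card (sbcs V U - ?D) else Suc (card (sbcs V U - ?D)))"
      by (rule card_insert_if[OF finr])
    show ?thesis by (subst e) simp
  qed
  have fD: "finite ?D" by blast
  have c3: "card (sbcs V U - ?D) = card (sbcs V U) - card ?D"
    by (rule card_Diff_subset[OF fD Dsub])
  have c4: "card ?D \<le> card (sbcs V U)" by (rule card_mono[OF finold Dsub])
  show ?thesis using c1 c2 c3 c4 cD by linarith
qed

end
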